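(* Let $(E,e)$ be a unital operator system, let $u$ be a unitary in $M_n(A_E)$, and let $x\in M_n(E)$ be a hermitian form with gap $g$. Then $uxu^*$ is a hermitian form with gap $g$, and $uxu^*\oplus e_n$ is equivalent to $x\oplus e_n$ as hermitian forms in $H(E,2n)$, i.e. $uxu^*\oplus e_n\sim_{2n} x\oplus e_n$.
   Context: A unital operator system $(E,e)$ is a matrix-ordered $*$-vector space with Archimedean matrix order unit $e$; $e_n=\mathrm{diag}(e,\dots,e)\in M_n(E)$. $C^*_{\mathrm{env}}(E)$ is its $C^*$-envelope with embedding $\iota_E$, through which $E$ is identified with a subspace of $C^*_{\mathrm{env}}(E)$. The multiplier $C^*$-algebra is $A_E=\{a\in C^*_{\mathrm{env}}(E): aE\subseteq E\}$. A self-adjoint $x\in M_n(E)$ is a hermitian form if there is $g>0$ with $|\psi^{(n)}(x)|\ge g\cdot\mathrm{id}^{\oplus n}$ for all pure and maximal ucp maps $\psi:E\to B(\mathcal H)$ (equivalently $|\iota_E^{(n)}(x)|\ge g\cdot 1$); $x$ has gap $g$ if this holds with constant $g$. $H(E,n)$ is the set of hermitian forms in $M_n(E)$; $x\sim_n x'$ means there is a norm-continuous path $[0,1]\to H(E,n)$ from $x$ to $x'$. For $x\in M_n(E)$, $x'\in M_{n'}(E)$, $x\oplus x'=\begin{pmatrix}x&0\\0&x'\end{pmatrix}\in M_{n+n'}(E)$. *)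

theory Defs
  imports "HOL-Analysis.Analysis"
begin

class cstar_algebra = real_normed_algebra_1 + banach +
  fixes scaleC :: "complex \<Rightarrow> 'a \<Rightarrow> 'a"
    and adj :: "'a \<Rightarrow> 'a"
  assumes scaleC_of_real: "scaleC (of_real r) x = scaleR r x"
    and scaleC_add_right: "scaleC a (x + y) = scaleC a x + scaleC a y"
    and scaleC_add_left: "scaleC (a + b) x = scaleC a x + scaleC b x"
    and scaleC_scaleC: "scaleC a (scaleC b x) = scaleC (a * b) x"
    and scaleC_one: "scaleC 1 x = x"
    and norm_scaleC: "norm (scaleC a x) = cmod a * norm x"
    and mult_scaleC_left: "scaleC a x * y = scaleC a (x * y)"
    and mult_scaleC_right: "x * scaleC a y = scaleC a (x * y)"
    and adj_adj: "adj (adj x) = x"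
    and adj_add: "adj (x + y) = adj x + adj y"
    and adj_mult: "adj (x * y) = adj y * adj x"
    and adj_scaleC: "adj (scaleC a x) = scaleC (cnj a) (adj x)"
    and cstar_identity: "norm (adj x * x) = norm x * norm x"

text \<open>An element of \<open>M_n(A)\<close> is represented as a function \<open>nat \<Rightarrow> nat \<Rightarrow> 'a\<close>
whose entries outside \<open>{0..<n} \<times> {0..<n}\<close> are zero.\<close>

type_synonym 'a mat = "nat \<Rightarrow> nat \<Rightarrow> 'a"

definition mat_in :: "nat \<Rightarrow> 'a::zero set \<Rightarrow> 'a mat \<Rightarrow> bool" where
  "mat_in n S X \<longleftrightarrow> (\<forall>i<n. \<forall>j<n. X i j \<in> S) \<and> (\<forall>i j. (n \<le> i \<or> n \<le> j) \<longrightarrow> X i j = 0)"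

definition mmult :: "nat \<Rightarrow> 'a::{times,comm_monoid_add} mat \<Rightarrow> 'a mat \<Rightarrow> 'a mat" where
  "mmult n X Y = (\<lambda>i j. \<Sum>k<n. X i k * Y k j)"

definition madj :: "'a::cstar_algebra mat \<Rightarrow> 'a mat" where
  "madj X = (\<lambda>i j. adj (X j i))"

text \<open>The unit \<open>1_n\<close> of \<open>M_n(A)\<close>; for an operator system with unit \<open>e = 1\<close>, this is \<open>e_n\<close>.\<close>
definition mone :: "nat \<Rightarrow> 'a::{zero,one} mat" where
  "mone n = (\<lambda>i j. if i = j \<and> i < n then 1 else 0)"

definition madd :: "'a::plus mat \<Rightarrow> 'a mat \<Rightarrow> 'a mat" where
  "madd X Y = (\<lambda>i j. X i j + Y i j)"

definition mdiff :: "'a::minus mat \<Rightarrow> 'a mat \<Rightarrow> 'a mat" where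
  "mdiff X Y = (\<lambda>i j. X i j - Y i j)"

definition mscale :: "real \<Rightarrow> 'a::real_vector mat \<Rightarrow> 'a mat" where
  "mscale r X = (\<lambda>i j. scaleR r (X i j))"

definition dsum :: "nat \<Rightarrow> nat \<Rightarrow> 'a::zero mat \<Rightarrow> 'a mat \<Rightarrow> 'a mat" where
  "dsum n n' x x' = (\<lambda>i j. if i < n \<and> j < n then x i j
       else if n \<le> i \<and> i < n + n' \<and> n \<le> j \<and> j < n + n' then x' (i - n) (j - n)
       else 0)"

definition mpos :: "nat \<Rightarrow> 'a::cstar_algebra mat \<Rightarrow> bool" where
  "mpos n P \<longleftrightarrow> (\<exists>Y. mat_in n UNIV Y \<and> P = mmult n (madj Y) Y)"

definition mle :: "nat \<Rightarrow> 'a::cstar_algebra mat \<Rightarrow> 'a mat \<Rightarrow> bool" where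
  "mle n X Y \<longleftrightarrow> mpos n (mdiff Y X)"

definition mnorm :: "nat \<Rightarrow> 'a::cstar_algebra mat \<Rightarrow> real" where
  "mnorm n X = Inf {t. 0 \<le> t \<and> mle n (mmult n (madj X) X) (mscale (t\<^sup>2) (mone n))}"

text \<open>\<open>|X| \<ge> g\<cdot>1_n\<close>, where \<open>|X|\<close> is the positive square root of \<open>X\<^sup>*X\<close>.\<close>
definition mabs_ge :: "nat \<Rightarrow> 'a::cstar_algebra mat \<Rightarrow> real \<Rightarrow> bool" where
  "mabs_ge n X g \<longleftrightarrow> (\<exists>C. mat_in n UNIV C \<and> mpos n C \<and> mmult n C C = mmult n (madj X) X
                          \<and> mle n (mscale g (mone n)) C)"

text \<open>A (concrete) unital operator system inside a C*-algebra: a self-adjoint complex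
subspace containing the unit (the unit \<open>e\<close> is identified with \<open>1\<close>).\<close>
definition opsys :: "'a::cstar_algebra set \<Rightarrow> bool" where
  "opsys E \<longleftrightarrow> 0 \<in> E \<and> 1 \<in> E \<and> (\<forall>x\<in>E. \<forall>y\<in>E. x + y \<in> E)
     \<and> (\<forall>c. \<forall>x\<in>E. scaleC c x \<in> E) \<and> (\<forall>x\<in>E. adj x \<in> E)"

definition star_subalg :: "'a::cstar_algebra set \<Rightarrow> bool" where
  "star_subalg S \<longleftrightarrow> 0 \<in> S \<and> 1 \<in> S \<and> (\<forall>x\<in>S. \<forall>y\<in>S. x + y \<in> S \<and> x * y \<in> S)
     \<and> (\<forall>c. \<forall>x\<in>S. scaleC c x \<in> S) \<and> (\<forall>x\<in>S. adj x \<in> S)"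

definition closed_ideal :: "'a::cstar_algebra set \<Rightarrow> bool" where
  "closed_ideal J \<longleftrightarrow> closed J \<and> 0 \<in> J \<and> (\<forall>x\<in>J. \<forall>y\<in>J. x + y \<in> J)
     \<and> (\<forall>c. \<forall>x\<in>J. scaleC c x \<in> J) \<and> (\<forall>a. \<forall>x\<in>J. a * x \<in> J \<and> x * a \<in> J)"

text \<open>A boundary ideal for \<open>E\<close>: the quotient map \<open>A \<rightarrow> A/J\<close> is completely isometric
on \<open>E\<close>; here \<open>M_n(A/J) \<cong> M_n(A)/M_n(J)\<close> with the quotient norm.\<close>
definition boundary_ideal :: "'a::cstar_algebra set \<Rightarrow> 'a set \<Rightarrow> bool" where
  "boundary_ideal E J \<longleftrightarrow> closed_ideal J \<and>
     (\<forall>n X. mat_in n E X \<longrightarrow> (INF K\<in>{K. mat_in n J K}. mnorm n (madd X K)) = mnorm n X)"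

text \<open>The ambient C*-algebra (the whole type) is the C*-envelope of \<open>E\<close>:
it is generated by \<open>E\<close> as a C*-algebra and the Shilov boundary ideal is trivial.\<close>
definition is_cstar_envelope :: "'a::cstar_algebra set \<Rightarrow> bool" where
  "is_cstar_envelope E \<longleftrightarrow> opsys E
     \<and> (\<forall>S. closed S \<and> star_subalg S \<and> E \<subseteq> S \<longrightarrow> S = UNIV)
     \<and> (\<forall>J. boundary_ideal E J \<longrightarrow> J = {0})"

definition multipliers :: "'a::cstar_algebra set \<Rightarrow> 'a set" where
  "multipliers E = {a. \<forall>x\<in>E. a * x \<in> E}"

definition munitary :: "nat \<Rightarrow> 'a::cstar_algebra set \<Rightarrow> 'a mat \<Rightarrow> bool" where
  "munitary n S u \<longleftrightarrow> mat_in n S u \<and> mmult n u (madj u) = mone n \<and> mmult n (madj u) u = mone n"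

definition hform_gap :: "'a::cstar_algebra set \<Rightarrow> nat \<Rightarrow> 'a mat \<Rightarrow> real \<Rightarrow> bool" where
  "hform_gap E n x g \<longleftrightarrow> mat_in n E x \<and> madj x = x \<and> 0 < g \<and> mabs_ge n x g"

definition H :: "'a::cstar_algebra set \<Rightarrow> nat \<Rightarrow> 'a mat set" where
  "H E n = {x. \<exists>g. hform_gap E n x g}"

definition hequiv :: "'a::cstar_algebra set \<Rightarrow> nat \<Rightarrow> 'a mat \<Rightarrow> 'a mat \<Rightarrow> bool" where
  "hequiv E n x x' \<longleftrightarrow> (\<exists>p :: real \<Rightarrow> 'a mat.
      p 0 = x \<and> p 1 = x' \<and> (\<forall>t\<in>{0..1}. p t \<in> H E n) \<and>
      (\<forall>t\<in>{0..1}. ((\<lambda>s. mnorm n (mdiff (p s) (p t))) \<longlongrightarrow> 0) (at t within {0..1})))"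

end

theory Submission
  imports Defs
begin


lemma adj_zero[simp]: "adj (0::'a::cstar_algebra) = 0"
  using adj_add[of "0::'a" 0] by simp
lemma adj_one[simp]: "adj (1::'a::cstar_algebra) = 1"
proof -
  have "adj (adj 1 * (1::'a)) = adj 1 * adj (adj 1)" by (rule adj_mult)
  then show ?thesis by (simp add: adj_adj)
qed
lemma adj_uminus: "adj (- x::'a::cstar_algebra) = - adj x"
proof -
  have "adj x + adj (-x) = 0" using adj_add[of x "-x"] by simp
  then show ?thesis by (rule add_eq_0_iff[THEN iffD1])
qed
lemma adj_diff: "adj (x - y::'a::cstar_algebra) = adj x - adj y"
  unfolding diff_conv_add_uminus adj_add adj_uminus ..
lemma adj_scaleR: "adj (scaleR r x::'a::cstar_algebra) = scaleR r (adj x)"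
proof -
  note trans3 = trans[OF trans]
  have 1: "adj (scaleR r x) = adj (scaleC (complex_of_real r) x)" by (simp only: scaleC_of_real)
  have 2: "adj (scaleC (complex_of_real r) x) = scaleC (cnj (complex_of_real r)) (adj x)" by (rule adj_scaleC)
  have 3: "scaleC (cnj (complex_of_real r)) (adj x) = scaleR r (adj x)"
    unfolding complex_cnj_complex_of_real by (rule scaleC_of_real)
  show ?thesis using 1 2 3 by (rule trans3)
qed
lemma adj_sum: "adj (sum f K::'a::cstar_algebra) = (\<Sum>k\<in>K. adj (f k))"
  by (induction K rule: infinite_finite_induct) (auto simp: adj_add)
lemma norm_adj_ge: "norm (x::'a::cstar_algebra) \<le> norm (adj x)"
proof (cases "x = 0")
  case False
  have "norm x * norm x = norm (adj x * x)" by (simp add: cstar_identity)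
  also have "\<dots> \<le> norm (adj x) * norm x" by (rule norm_mult_ineq)
  finally have "norm x * norm x \<le> norm (adj x) * norm x" .
  then show ?thesis using False by simp
qed simp
lemma norm_adj[simp]: "norm (adj x::'a::cstar_algebra) = norm x"
  using norm_adj_ge[of x] norm_adj_ge[of "adj x"] by (simp add: adj_adj)
lemma bl_adj: "bounded_linear (adj::'a::cstar_algebra \<Rightarrow> 'a)"
  by (rule bounded_linear_intro[where K=1]) (auto simp: adj_add adj_scaleR)
lemma tendsto_adj[tendsto_intros]: "(f \<longlongrightarrow> a) F \<Longrightarrow> ((\<lambda>s. adj (f s::'a::cstar_algebra)) \<longlongrightarrow> adj a) F"
  by (rule bounded_linear.tendsto[OF bl_adj])

lemma sum_lessThan_add: "(\<Sum>k<(a::nat)+b. f k) = (\<Sum>k<a. f k) + (\<Sum>k<b. f (a+k))"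
  by (induction b) (simp_all add: add.assoc)

lemma sum_closed: "0 \<in> S \<Longrightarrow> (\<forall>x\<in>S. \<forall>y\<in>S. x+y \<in> S) \<Longrightarrow> (\<And>k. k \<in> K \<Longrightarrow> f k \<in> S) \<Longrightarrow> sum f K \<in> S"
  by (induction K rule: infinite_finite_induct) auto

definition mzero :: "'a::zero mat" where "mzero = (\<lambda>i j. 0)"
definition msc :: "nat \<Rightarrow> real \<Rightarrow> 'a::real_normed_algebra_1 mat" where "msc n a = mscale a (mone n)"

abbreviation supp :: "nat \<Rightarrow> 'a::zero mat \<Rightarrow> bool" where "supp n X \<equiv> mat_in n UNIV X"

lemma supp_iff: "supp n X \<longleftrightarrow> (\<forall>i j. (n \<le> i \<or> n \<le> j) \<longrightarrow> X i j = 0)"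
  by (simp add: mat_in_def)

lemma mat_in_supp: "mat_in n S X \<Longrightarrow> supp n X"
  by (simp add: mat_in_def)

lemma mmult_assoc: "mmult n (mmult n X Y) Z = mmult n X (mmult n Y (Z::'a::ring mat))"
  unfolding mmult_def
  by (auto intro!: ext simp: sum_distrib_left sum_distrib_right mult.assoc intro: sum.swap)

lemma madj_mmult: "madj (mmult n X Y) = mmult n (madj Y) (madj X)"
  unfolding mmult_def madj_def by (auto intro!: ext simp: adj_sum adj_mult)

lemma madj_madj[simp]: "madj (madj X) = X"
  unfolding madj_def by (simp add: adj_adj)

lemma mmult_mone_left: "supp n X \<Longrightarrow> mmult n (mone n) X = (X::'a::ring_1 mat)"
proof (intro ext)
  fix i j assume s: "supp n X"
  show "mmult n (mone n) X i j = X i j"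
  proof (cases "i < n")
    case True
    have "mmult n (mone n) X i j = (\<Sum>k<n. if k = i then X k j else 0)"
      unfolding mmult_def mone_def by (intro sum.cong) auto
    then show ?thesis using True by simp
  next
    case False
    then show ?thesis using s unfolding mmult_def mone_def supp_iff by auto
  qed
qed

lemma mmult_mone_right: "supp n X \<Longrightarrow> mmult n X (mone n) = (X::'a::ring_1 mat)"
  unfolding mmult_def mone_def supp_iff
  by (auto intro!: ext simp: if_distrib cong: if_cong)

lemma madj_mone[simp]: "madj (mone n) = (mone n :: 'a::cstar_algebra mat)"
  unfolding madj_def mone_def by (auto intro!: ext)

lemma madj_mscale: "madj (mscale r X) = mscale r (madj (X::'a::cstar_algebra mat))"
  unfolding madj_def mscale_def by (simp add: adj_scaleR)
lemma madj_madd: "madj (madd X Y) = madd (madj X) (madj (Y::'a::cstar_algebra mat))"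
  unfolding madj_def madd_def by (simp add: adj_add)
lemma madj_mdiff: "madj (mdiff X Y) = mdiff (madj X) (madj (Y::'a::cstar_algebra mat))"
  unfolding madj_def mdiff_def by (simp add: adj_diff)
lemma madj_mzero[simp]: "madj mzero = (mzero::'a::cstar_algebra mat)"
  unfolding madj_def mzero_def by simp
lemma madj_msc[simp]: "madj (msc n a) = (msc n a::'a::cstar_algebra mat)"
  unfolding msc_def by (simp add: madj_mscale)

lemma mmult_madd_left: "mmult n (madd X Y) Z = madd (mmult n X Z) (mmult n Y (Z::'a::ring mat))"
  unfolding mmult_def madd_def by (auto intro!: ext simp: distrib_right sum.distrib)
lemma mmult_madd_right: "mmult n Z (madd X Y) = madd (mmult n Z X) (mmult n Z (Y::'a::ring mat))"
  unfolding mmult_def madd_def by (auto intro!: ext simp: distrib_left sum.distrib)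
lemma mmult_mdiff_left: "mmult n (mdiff X Y) Z = mdiff (mmult n X Z) (mmult n Y (Z::'a::ring mat))"
  unfolding mmult_def mdiff_def by (auto intro!: ext simp: left_diff_distrib sum_subtractf)
lemma mmult_mdiff_right: "mmult n Z (mdiff X Y) = mdiff (mmult n Z X) (mmult n Z (Y::'a::ring mat))"
  unfolding mmult_def mdiff_def by (auto intro!: ext simp: right_diff_distrib sum_subtractf)
lemma mmult_mscale_left: "mmult n (mscale r X) Z = mscale r (mmult n X (Z::'a::real_normed_algebra mat))"
  unfolding mmult_def mscale_def by (auto intro!: ext simp: scaleR_sum_right)
lemma mmult_mscale_right: "mmult n Z (mscale r X) = mscale r (mmult n Z (X::'a::real_normed_algebra mat))"
  unfolding mmult_def mscale_def by (auto intro!: ext simp: scaleR_sum_right)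
lemma mmult_mzero_left[simp]: "mmult n mzero Z = (mzero::'a::ring mat)"
  unfolding mmult_def mzero_def by auto
lemma mmult_mzero_right[simp]: "mmult n Z mzero = (mzero::'a::ring mat)"
  unfolding mmult_def mzero_def by auto
lemma madd_mzero[simp]: "madd X mzero = X" "madd mzero X = (X::'a::monoid_add mat)"
  unfolding madd_def mzero_def by auto
lemma mscale_mscale[simp]: "mscale a (mscale b X) = mscale (a*b) (X::'a::real_vector mat)"
  unfolding mscale_def by auto
lemma mscale_one[simp]: "mscale 1 X = (X::'a::real_vector mat)"
  unfolding mscale_def by auto
lemma mscale_zero[simp]: "mscale 0 X = (mzero::'a::real_vector mat)"
  unfolding mscale_def mzero_def by auto
lemma mscale_mzero[simp]: "mscale a mzero = (mzero::'a::real_vector mat)"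
  unfolding mscale_def mzero_def by auto
lemma madd_mscale: "madd (mscale a X) (mscale b X) = mscale (a+b) (X::'a::real_vector mat)"
  unfolding mscale_def madd_def by (auto simp: scaleR_add_left)

lemma mmult_msc_left: "supp n X \<Longrightarrow> mmult n (msc n a) X = mscale a (X::'a::real_normed_algebra_1 mat)"
  unfolding msc_def by (simp add: mmult_mscale_left mmult_mone_left)
lemma mmult_msc_right: "supp n X \<Longrightarrow> mmult n X (msc n a) = mscale a (X::'a::real_normed_algebra_1 mat)"
  unfolding msc_def by (simp add: mmult_mscale_right mmult_mone_right)

lemma supp_mmult: "supp n X \<Longrightarrow> supp n Y \<Longrightarrow> supp n (mmult n X (Y::'a::ring mat))"
  unfolding supp_iff mmult_def by auto
lemma supp_madj: "supp n X \<Longrightarrow> supp n (madj (X::'a::cstar_algebra mat))"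
  unfolding supp_iff madj_def by auto
lemma supp_mone: "supp n (mone n::'a::{zero,one} mat)"
  unfolding supp_iff mone_def by auto
lemma supp_mzero: "supp n (mzero::'a::zero mat)"
  unfolding supp_iff mzero_def by auto
lemma supp_mscale: "supp n X \<Longrightarrow> supp n (mscale r (X::'a::real_vector mat))"
  unfolding supp_iff mscale_def by auto
lemma supp_madd: "supp n X \<Longrightarrow> supp n Y \<Longrightarrow> supp n (madd X (Y::'a::monoid_add mat))"
  unfolding supp_iff madd_def by auto
lemma supp_mdiff: "supp n X \<Longrightarrow> supp n Y \<Longrightarrow> supp n (mdiff X (Y::'a::group_add mat))"
  unfolding supp_iff mdiff_def by auto
lemma supp_msc: "supp n (msc n a::'a::real_normed_algebra_1 mat)"
  unfolding msc_def by (intro supp_mscale supp_mone)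

lemmas supp_intros = supp_mmult supp_madj supp_mone supp_mzero supp_mscale supp_madd supp_mdiff supp_msc



definition enorm :: "nat \<Rightarrow> 'a::real_normed_vector mat \<Rightarrow> real" where
  "enorm m X = (\<Sum>i<m. \<Sum>j<m. norm (X i j))"

lemma enorm_nonneg: "0 \<le> enorm m X"
  unfolding enorm_def by (intro sum_nonneg) auto

lemma row_le_enorm: "k < m \<Longrightarrow> (\<Sum>j<m. norm (X k j)) \<le> enorm m X"
  unfolding enorm_def using member_le_sum[of k "{..<m}" "\<lambda>i. \<Sum>j<m. norm (X i j)"]
  by (simp add: sum_nonneg)

lemma entry_le_enorm: "i < m \<Longrightarrow> j < m \<Longrightarrow> norm (X i j) \<le> enorm m X"
proof -
  assume a: "i < m" "j < m"
  have "norm (X i j) \<le> (\<Sum>j<m. norm (X i j))" using a by (intro member_le_sum) auto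
  also have "\<dots> \<le> enorm m X" using a(1) by (rule row_le_enorm)
  finally show ?thesis .
qed

lemma enorm_mmult: "enorm m (mmult m X Y) \<le> enorm m X * enorm m (Y::'a::real_normed_algebra mat)"
proof -
  have "enorm m (mmult m X Y) \<le> (\<Sum>i<m. \<Sum>j<m. \<Sum>k<m. norm (X i k) * norm (Y k j))"
    unfolding enorm_def mmult_def
    by (intro sum_mono order.trans[OF norm_sum] norm_mult_ineq)
  also have "\<dots> = (\<Sum>i<m. \<Sum>k<m. norm (X i k) * (\<Sum>j<m. norm (Y k j)))"
    by (rule sum.cong[OF refl], subst sum.swap, simp only: sum_distrib_left)
  also have "\<dots> \<le> (\<Sum>i<m. \<Sum>k<m. norm (X i k) * enorm m Y)"
    by (intro sum_mono mult_left_mono row_le_enorm) auto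
  also have "\<dots> = enorm m X * enorm m Y"
    unfolding enorm_def by (simp add: sum_distrib_right)
  finally show ?thesis .
qed

lemma enorm_madj: "enorm m (madj X) = enorm m (X::'a::cstar_algebra mat)"
  unfolding enorm_def madj_def norm_adj by (rule sum.swap)

lemma enorm_mscale: "enorm m (mscale r X) = \<bar>r\<bar> * enorm m X"
  unfolding enorm_def mscale_def by (simp add: sum_distrib_left)

definition blk :: "nat \<Rightarrow> 'a::zero mat \<Rightarrow> 'a mat \<Rightarrow> 'a mat \<Rightarrow> 'a mat \<Rightarrow> 'a mat" where
  "blk n A B C D = (\<lambda>i j. if i < n \<and> j < n then A i j
     else if i < n \<and> n \<le> j \<and> j < n+n then B i (j-n)
     else if n \<le> i \<and> i < n+n \<and> j < n then C (i-n) j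
     else if n \<le> i \<and> i < n+n \<and> n \<le> j \<and> j < n+n then D (i-n) (j-n) else 0)"

lemma blk_11: "i < n \<Longrightarrow> j < n \<Longrightarrow> blk n A B C D i j = A i j"
  unfolding blk_def by simp
lemma blk_12: "i < n \<Longrightarrow> j < n \<Longrightarrow> blk n A B C D i (n+j) = B i j"
  unfolding blk_def by simp
lemma blk_21: "i < n \<Longrightarrow> j < n \<Longrightarrow> blk n A B C D (n+i) j = C i j"
  unfolding blk_def by simp
lemma blk_22: "i < n \<Longrightarrow> j < n \<Longrightarrow> blk n A B C D (n+i) (n+j) = D i j"
  unfolding blk_def by simp
lemma blk_out1: "n+n \<le> i \<Longrightarrow> blk n A B C D i j = 0"
  unfolding blk_def by simp
lemma blk_out2: "n+n \<le> j \<Longrightarrow> blk n A B C D i j = 0"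
  unfolding blk_def by simp

lemmas blk_simps = blk_11 blk_12 blk_21 blk_22 blk_out1 blk_out2

lemma idx_cases:
  fixes i n :: nat
  assumes "i < n \<Longrightarrow> P" "\<And>i'. i = n + i' \<Longrightarrow> i' < n \<Longrightarrow> P" "n+n \<le> i \<Longrightarrow> P"
  shows P
proof (cases "i < n")
  case True then show ?thesis by (rule assms(1))
next
  case F: False
  show ?thesis
  proof (cases "i < n+n")
    case True then show ?thesis using assms(2)[of "i-n"] F by simp
  next
    case False then show ?thesis using assms(3) by simp
  qed
qed

lemma blk_mult:
  "mmult (n+n) (blk n A B C D) (blk n A' B' C' D') =
   blk n (madd (mmult n A A') (mmult n B C')) (madd (mmult n A B') (mmult n B D'))
         (madd (mmult n C A') (mmult n D C')) (madd (mmult n C B') (mmult n D (D'::'a::ring mat)))"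
proof (intro ext)
  fix i j
  show "mmult (n+n) (blk n A B C D) (blk n A' B' C' D') i j = blk n (madd (mmult n A A') (mmult n B C')) (madd (mmult n A B') (mmult n B D'))
         (madd (mmult n C A') (mmult n D C')) (madd (mmult n C B') (mmult n D D')) i j"
    unfolding mmult_def sum_lessThan_add
    by (rule idx_cases[of i n]; rule idx_cases[of j n])
       (simp_all add: blk_simps madd_def)
qed

lemma madj_blk: "madj (blk n A B C D) = blk n (madj A) (madj C) (madj B) (madj (D::'a::cstar_algebra mat))"
  unfolding madj_def blk_def by (auto intro!: ext)

lemma mone_blk: "mone (n+n) = blk n (mone n) mzero mzero (mone n :: 'a::{zero,one} mat)"
  unfolding mone_def blk_def mzero_def by (auto intro!: ext)

lemma dsum_blk: "dsum n n x y = blk n x mzero mzero (y::'a::zero mat)"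
  unfolding dsum_def blk_def mzero_def by (auto intro!: ext)

lemma mat_in_blk: "0 \<in> S \<Longrightarrow> mat_in n S A \<Longrightarrow> mat_in n S B \<Longrightarrow> mat_in n S C \<Longrightarrow> mat_in n S D \<Longrightarrow> mat_in (n+n) S (blk n A B C D)"
  unfolding mat_in_def blk_def by auto

lemma mdiff_blk: "mdiff (blk n A B C D) (blk n A' B' C' D') = blk n (mdiff A A') (mdiff B B') (mdiff C C') (mdiff D (D'::'a::group_add mat))"
  unfolding mdiff_def blk_def by (auto intro!: ext)

lemma mscale_blk: "mscale r (blk n A B C D) = blk n (mscale r A) (mscale r B) (mscale r C) (mscale r (D::'a::real_vector mat))"
  unfolding mscale_def blk_def by (auto intro!: ext)

lemma mdiff_mzero[simp]: "mdiff mzero mzero = (mzero::'a::group_add mat)"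
  unfolding mdiff_def mzero_def by auto



lemma opsys_scaleR: "opsys E \<Longrightarrow> x \<in> E \<Longrightarrow> scaleR r x \<in> E"
  unfolding opsys_def using scaleC_of_real[of r x] by metis

lemma opsys_sum: "opsys E \<Longrightarrow> (\<And>k. k \<in> K \<Longrightarrow> f k \<in> E) \<Longrightarrow> sum f K \<in> E"
  by (rule sum_closed) (auto simp: opsys_def)

lemma opsys_diff: "opsys E \<Longrightarrow> x \<in> E \<Longrightarrow> y \<in> E \<Longrightarrow> x - y \<in> E"
proof -
  assume o: "opsys E" and xy: "x \<in> E" "y \<in> E"
  have "scaleR (-1) y \<in> E" using o xy(2) by (rule opsys_scaleR)
  then have "x + scaleR (-1) y \<in> E" using o xy(1) unfolding opsys_def by blast
  then show ?thesis by simp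
qed

lemma mult_mem_mul: "a \<in> multipliers E \<Longrightarrow> b \<in> multipliers E \<Longrightarrow> a * b \<in> multipliers E"
  unfolding multipliers_def by (simp add: mult.assoc)
lemma add_mem_mul: "opsys E \<Longrightarrow> a \<in> multipliers E \<Longrightarrow> b \<in> multipliers E \<Longrightarrow> a + b \<in> multipliers E"
  unfolding multipliers_def opsys_def by (simp add: distrib_right)
lemma zero_mem_mul: "opsys E \<Longrightarrow> 0 \<in> multipliers E"
  unfolding multipliers_def opsys_def by simp
lemma one_mem_mul: "1 \<in> multipliers E"
  unfolding multipliers_def by simp
lemma scaleR_mem_mul: "opsys E \<Longrightarrow> a \<in> multipliers E \<Longrightarrow> scaleR r a \<in> multipliers E"
  unfolding multipliers_def by (simp add: opsys_scaleR)
lemma diff_mem_mul: "opsys E \<Longrightarrow> a \<in> multipliers E \<Longrightarrow> b \<in> multipliers E \<Longrightarrow> a - b \<in> multipliers E"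
  unfolding multipliers_def by (simp add: opsys_diff left_diff_distrib)
lemma sum_mem_mul: "opsys E \<Longrightarrow> (\<And>k. k \<in> K \<Longrightarrow> f k \<in> multipliers E) \<Longrightarrow> sum f K \<in> multipliers E"
  by (rule sum_closed) (auto simp: zero_mem_mul add_mem_mul)

lemma mul_in_E: "a \<in> multipliers E \<Longrightarrow> x \<in> E \<Longrightarrow> a * x \<in> E"
  unfolding multipliers_def by simp

lemma E_mul_adj: "opsys E \<Longrightarrow> a \<in> multipliers E \<Longrightarrow> x \<in> E \<Longrightarrow> x * adj a \<in> E"
proof -
  assume o: "opsys E" and a: "a \<in> multipliers E" and x: "x \<in> E"
  have "adj x \<in> E" using o x unfolding opsys_def by blast
  then have "a * adj x \<in> E" using a by (simp add: mul_in_E)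
  then have "adj (a * adj x) \<in> E" using o unfolding opsys_def by blast
  then show ?thesis by (simp add: adj_mult adj_adj)
qed

abbreviation L where "L E \<equiv> multipliers E"

lemma matL_mmult: "opsys E \<Longrightarrow> mat_in n (L E) X \<Longrightarrow> mat_in n (L E) Y \<Longrightarrow> mat_in n (L E) (mmult n X Y)"
  unfolding mat_in_def mmult_def by (auto intro!: sum_mem_mul mult_mem_mul)
lemma matL_mscale: "opsys E \<Longrightarrow> mat_in n (L E) X \<Longrightarrow> mat_in n (L E) (mscale r X)"
  unfolding mat_in_def mscale_def by (auto intro!: scaleR_mem_mul)
lemma matL_madd: "opsys E \<Longrightarrow> mat_in n (L E) X \<Longrightarrow> mat_in n (L E) Y \<Longrightarrow> mat_in n (L E) (madd X Y)"
  unfolding mat_in_def madd_def by (auto intro!: add_mem_mul)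
lemma matL_mdiff: "opsys E \<Longrightarrow> mat_in n (L E) X \<Longrightarrow> mat_in n (L E) Y \<Longrightarrow> mat_in n (L E) (mdiff X Y)"
  unfolding mat_in_def mdiff_def by (auto intro!: diff_mem_mul)
lemma matL_mone: "opsys E \<Longrightarrow> mat_in n (L E) (mone n)"
  unfolding mat_in_def mone_def by (auto simp: one_mem_mul zero_mem_mul)
lemma matL_mzero: "opsys E \<Longrightarrow> mat_in n (L E) mzero"
  unfolding mat_in_def mzero_def by (auto simp: zero_mem_mul)
lemma matL_msc: "opsys E \<Longrightarrow> mat_in n (L E) (msc n a)"
  unfolding msc_def by (intro matL_mscale matL_mone)

lemma matE_left: "opsys E \<Longrightarrow> mat_in n (L E) W \<Longrightarrow> mat_in n E X \<Longrightarrow> mat_in n E (mmult n W X)"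
  unfolding mat_in_def mmult_def by (auto intro!: opsys_sum mul_in_E)
lemma matE_right: "opsys E \<Longrightarrow> mat_in n (L E) W \<Longrightarrow> mat_in n E X \<Longrightarrow> mat_in n E (mmult n X (madj W))"
  unfolding mat_in_def mmult_def madj_def by (auto intro!: opsys_sum E_mul_adj)

lemma mpos_conj: "mpos m P \<Longrightarrow> supp m w \<Longrightarrow> mpos m (mmult m (mmult m w P) (madj w))"
proof -
  assume "mpos m P" and w: "supp m w"
  then obtain Y where Y: "supp m Y" "P = mmult m (madj Y) Y" unfolding mpos_def by blast
  let ?Y = "mmult m Y (madj w)"
  have "supp m ?Y" using Y w by (intro supp_intros)
  moreover have "mmult m (mmult m w P) (madj w) = mmult m (madj ?Y) ?Y"
    unfolding Y(2) madj_mmult madj_madj mmult_assoc ..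
  ultimately show ?thesis unfolding mpos_def by blast
qed

lemma uni_cancel1: "mmult m (madj w) w = mone m \<Longrightarrow> supp m Z \<Longrightarrow> mmult m (madj w) (mmult m w Z) = (Z::'a::cstar_algebra mat)"
  by (simp add: mmult_assoc[symmetric] mmult_mone_left)
lemma uni_cancel2: "mmult m w (madj w) = mone m \<Longrightarrow> supp m Z \<Longrightarrow> mmult m w (mmult m (madj w) Z) = (Z::'a::cstar_algebra mat)"
  by (simp add: mmult_assoc[symmetric] mmult_mone_left)

lemma conj_gap:
  assumes o: "opsys E" and u: "munitary m (multipliers E) w" and h: "hform_gap E m X g"
  shows "hform_gap E m (mmult m (mmult m w X) (madj w)) g"
proof -
  have wL: "mat_in m (L E) w" and u1: "mmult m w (madj w) = mone m" and u2: "mmult m (madj w) w = mone m"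
    using u unfolding munitary_def by auto
  have sw: "supp m w" using wL by (rule mat_in_supp)
  have XE: "mat_in m E X" and Xs: "madj X = X" and g: "0 < g" and ab: "mabs_ge m X g"
    using h unfolding hform_gap_def by auto
  have sX: "supp m X" using XE by (rule mat_in_supp)
  obtain C where C: "supp m C" "mpos m C" "mmult m C C = mmult m (madj X) X" "mle m (mscale g (mone m)) C"
    using ab unfolding mabs_ge_def by blast
  let ?C = "mmult m (mmult m w C) (madj w)"
  have 1: "mat_in m E (mmult m (mmult m w X) (madj w))"
    using o wL XE by (intro matE_right matE_left)
  have 2: "madj (mmult m (mmult m w X) (madj w)) = mmult m (mmult m w X) (madj w)"
    unfolding madj_mmult madj_madj Xs mmult_assoc ..
  have 3: "supp m ?C" using C(1) sw by (intro supp_intros)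
  have 4: "mpos m ?C" using C(2) sw by (rule mpos_conj)
  have 5: "mmult m ?C ?C = mmult m (madj (mmult m (mmult m w X) (madj w))) (mmult m (mmult m w X) (madj w))"
  proof -
    have "mmult m ?C ?C = mmult m w (mmult m C (mmult m (madj w) (mmult m w (mmult m C (madj w)))))"
      by (simp only: mmult_assoc)
    also have "\<dots> = mmult m w (mmult m (mmult m C C) (madj w))"
      using u2 C(1) sw by (simp add: uni_cancel1 supp_intros mmult_assoc)
    also have "\<dots> = mmult m w (mmult m (madj X) (mmult m (madj w) (mmult m w (mmult m X (madj w)))))"
      using u2 sX sw by (simp add: uni_cancel1 supp_intros mmult_assoc C(3))
    also have "\<dots> = mmult m (madj (mmult m (mmult m w X) (madj w))) (mmult m (mmult m w X) (madj w))"
      by (simp only: madj_mmult madj_madj mmult_assoc)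
    finally show ?thesis .
  qed
  have 6: "mle m (mscale g (mone m)) ?C"
  proof -
    obtain Q where Q: "mdiff C (mscale g (mone m)) = Q" "mpos m Q" using C(4) unfolding mle_def by blast
    have "mdiff ?C (mscale g (mone m)) = mmult m (mmult m w Q) (madj w)"
      unfolding Q(1)[symmetric] mmult_mdiff_left mmult_mdiff_right mmult_mscale_left mmult_mscale_right
      using sw u1 by (simp add: mmult_mone_right)
    then show ?thesis unfolding mle_def using mpos_conj[OF Q(2) sw] by simp
  qed
  show ?thesis unfolding hform_gap_def mabs_ge_def using 1 2 3 4 5 6 g by blast
qed



definition uni :: "nat \<Rightarrow> 'a::cstar_algebra mat \<Rightarrow> bool" where
  "uni m w \<longleftrightarrow> supp m w \<and> mmult m w (madj w) = mone m \<and> mmult m (madj w) w = mone m"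

lemma uni_mult: "uni m A \<Longrightarrow> uni m B \<Longrightarrow> uni m (mmult m A B)"
  unfolding uni_def
  by (auto simp: supp_mmult madj_mmult mmult_assoc uni_cancel1 uni_cancel2 supp_madj supp_mone)

lemma uni_madj: "uni m A \<Longrightarrow> uni m (madj A)"
  unfolding uni_def by (auto simp: supp_madj)

lemma msc_0[simp]: "msc n 0 = (mzero::'a::real_normed_algebra_1 mat)"
  unfolding msc_def by simp
lemma msc_1[simp]: "msc n 1 = (mone n::'a::real_normed_algebra_1 mat)"
  unfolding msc_def by simp
lemma msc_mult[simp]: "mmult n (msc n a) (msc n b) = (msc n (a*b)::'a::real_normed_algebra_1 mat)"
  unfolding msc_def by (simp add: mmult_mscale_left mmult_mone_left supp_intros)
lemma msc_add[simp]: "madd (msc n a) (msc n b) = (msc n (a+b)::'a::real_normed_algebra_1 mat)"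
  unfolding msc_def by (rule madd_mscale)
lemma mone_mone[simp]: "mmult n (mone n) (mone n) = (mone n::'a::ring_1 mat)"
  by (simp add: mmult_mone_left supp_mone)

definition rot :: "nat \<Rightarrow> real \<Rightarrow> real \<Rightarrow> 'a::real_normed_algebra_1 mat" where
  "rot n a b = blk n (msc n a) (msc n (-b)) (msc n b) (msc n a)"

lemma madj_rot: "madj (rot n a b) = (rot n a (-b)::'a::cstar_algebra mat)"
  unfolding rot_def madj_blk by simp

lemma uni_rot: "a*a + b*b = 1 \<Longrightarrow> uni (n+n) (rot n a b::'a::cstar_algebra mat)"
proof -
  assume h: "a*a + b*b = 1"
  have e1: "a*a + (-b)*(-b) = 1" "a * b + - b * a = 0" "b * a + a * - b = 0" "b*b + a*a = 1"
    "a * - b + - b * a = - (2*a*b)" using h by (auto simp: algebra_simps)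
  have e2: "msc n (a*a+b*b) = (mone n :: 'a mat)" unfolding h by simp
  have "mmult (n+n) (rot n a b) (madj (rot n a b)) = (mone (n+n)::'a mat)"
    unfolding madj_rot unfolding rot_def blk_mult mone_blk by (simp add: e1 e2)
  moreover have "mmult (n+n) (madj (rot n a b)) (rot n a b) = (mone (n+n)::'a mat)"
    unfolding madj_rot unfolding rot_def blk_mult mone_blk by (simp add: e1 e2)
  moreover have "supp (n+n) (rot n a b::'a mat)"
    unfolding rot_def by (rule mat_in_blk) (auto intro: supp_intros)
  ultimately show ?thesis unfolding uni_def by simp
qed

lemma uni_U: "munitary n S u \<Longrightarrow> uni (n+n) (blk n u mzero mzero (mone n))"
proof -
  assume u: "munitary n S u"
  then have su: "supp n u" unfolding munitary_def by (auto dest: mat_in_supp)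
  show ?thesis unfolding uni_def madj_blk blk_mult mone_blk using u su
    by (auto simp: munitary_def intro!: mat_in_blk supp_intros)
qed


lemma mscale_mone_msc[simp]: "mscale a (mone n) = (msc n a::'a::real_normed_algebra_1 mat)"
  unfolding msc_def ..
lemma mscale_msc[simp]: "mscale a (msc n b) = (msc n (a*b)::'a::real_normed_algebra_1 mat)"
  by (simp only: msc_def mscale_mscale)
lemma mdiff_mone_msc: "mdiff (mone n) (msc n g) = (msc n (1 - g)::'a::real_normed_algebra_1 mat)"
  unfolding mdiff_def msc_def mscale_def mone_def by (auto intro!: ext simp: scaleR_diff_left)
lemma mdiff_msc_msc: "mdiff (msc n a) (msc n g) = (msc n (a - g)::'a::real_normed_algebra_1 mat)"
  unfolding mdiff_def msc_def mscale_def mone_def by (auto intro!: ext simp: scaleR_diff_left)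

lemma comb: "p + q = 1 \<Longrightarrow> q * g = 1 \<Longrightarrow>
  madd (mscale p C) (mscale q (mdiff C (mscale g M))) = mdiff C (mscale 1 (M::'a::real_vector mat))"
proof (intro ext)
  fix i j assume h: "p + q = 1" "q * g = 1"
  have "p *\<^sub>R C i j + q *\<^sub>R (C i j - g *\<^sub>R M i j) = (p + q) *\<^sub>R C i j - (q * g) *\<^sub>R M i j"
    by (simp add: scaleR_diff_right scaleR_add_left algebra_simps)
  then show "madd (mscale p C) (mscale q (mdiff C (mscale g M))) i j = mdiff C (mscale 1 M) i j"
    unfolding madd_def mscale_def mdiff_def h by simp
qed

lemma matE_mzero: "opsys E \<Longrightarrow> mat_in n E mzero"
  unfolding mat_in_def mzero_def opsys_def by auto
lemma matE_mone: "opsys E \<Longrightarrow> mat_in n E (mone n)"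
  unfolding mat_in_def mone_def opsys_def by auto

lemma x2_gap:
  assumes o: "opsys E" and h: "hform_gap E n x g"
  shows "\<exists>g'. hform_gap E (n+n) (blk n x mzero mzero (mone n)) g'"
proof -
  have XE: "mat_in n E x" and Xs: "madj x = x" and g: "0 < g" and ab: "mabs_ge n x g"
    using h unfolding hform_gap_def by auto
  obtain C where C: "supp n C" "mpos n C" "mmult n C C = mmult n (madj x) x" "mle n (mscale g (mone n)) C"
    using ab unfolding mabs_ge_def by blast
  obtain Z where Z: "supp n Z" "C = mmult n (madj Z) Z" using C(2) unfolding mpos_def by blast
  obtain Y where Y: "supp n Y" "mdiff C (msc n g) = mmult n (madj Y) Y" using C(4) unfolding mle_def mpos_def by auto
  let ?X = "blk n x mzero mzero (mone n)"
  let ?C = "blk n C mzero mzero (mone n)"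
  have 1: "mat_in (n+n) E ?X"
    using o XE by (intro mat_in_blk matE_mzero matE_mone) (auto simp: opsys_def)
  have 2: "madj ?X = ?X" unfolding madj_blk Xs by simp
  have 3: "supp (n+n) ?C" using C(1) by (intro mat_in_blk supp_intros) auto
  have 4: "mpos (n+n) ?C"
  proof -
    have "?C = mmult (n+n) (madj (blk n Z mzero mzero (mone n))) (blk n Z mzero mzero (mone n))"
      unfolding madj_blk blk_mult Z(2) by simp
    moreover have "supp (n+n) (blk n Z mzero mzero (mone n))" using Z(1) by (intro mat_in_blk supp_intros) auto
    ultimately show ?thesis unfolding mpos_def by blast
  qed
  have 5: "mmult (n+n) ?C ?C = mmult (n+n) (madj ?X) ?X"
    unfolding madj_blk blk_mult C(3) by simp
  show ?thesis
  proof (cases "g \<le> 1")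
    case True
    let ?W = "blk n Y mzero mzero (msc n (sqrt (1 - g)))"
    have sq: "sqrt (1 - g) * sqrt (1 - g) = 1 - g" "\<bar>1 - g\<bar> = 1 - g" using True by simp_all
    have "mdiff ?C (mscale g (mone (n+n))) = mmult (n+n) (madj ?W) ?W"
      unfolding mone_blk mscale_blk mdiff_blk madj_blk blk_mult
      by (simp add: Y(2) mdiff_mone_msc sq)
    moreover have "supp (n+n) ?W" using Y(1) by (intro mat_in_blk supp_intros) auto
    ultimately have 6: "mle (n+n) (mscale g (mone (n+n))) ?C" unfolding mle_def mpos_def by blast
    show ?thesis unfolding hform_gap_def mabs_ge_def using 1 2 3 4 5 6 g by blast
  next
    case False
    let ?a = "sqrt (1 - 1/g)" and ?b = "sqrt (1/g)"
    let ?W = "blk n (mscale ?a Z) mzero (mscale ?b Y) mzero"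
    have ga: "?a * ?a = 1 - 1/g" using False by simp
    have gb: "?b * ?b = 1/g" using False by simp
    have pq: "?a * ?a + ?b * ?b = 1" "?b * ?b * g = 1" unfolding ga gb using False by auto
    have cmb: "madd (mscale (?a * ?a) C) (mscale (?b * ?b) (mdiff C (msc n g))) = mdiff C (mone n)"
      using comb[OF pq, of C "mone n"] by (simp only: mscale_mone_msc msc_1)
    have e1: "mmult n (madj (mscale ?a Z)) (mscale ?a Z) = mscale (?a*?a) C"
      by (simp only: madj_mscale mmult_mscale_left mmult_mscale_right mscale_mscale Z(2)[symmetric])
    have e2: "mmult n (madj (mscale ?b Y)) (mscale ?b Y) = mscale (?b*?b) (mdiff C (msc n g))"
      by (simp only: madj_mscale mmult_mscale_left mmult_mscale_right mscale_mscale Y(2)[symmetric])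
    have e3: "mdiff (mone n) (mone n) = (mzero::'a mat)" unfolding mdiff_def mzero_def by simp
    have "mmult (n+n) (madj ?W) ?W = blk n (mdiff C (mone n)) mzero mzero mzero"
      unfolding madj_blk blk_mult madj_mzero mmult_mzero_left mmult_mzero_right madd_mzero e1 e2 cmb ..
    moreover have "mdiff ?C (mscale 1 (mone (n+n))) = blk n (mdiff C (mone n)) mzero mzero mzero"
      unfolding mone_blk mscale_blk mdiff_blk mscale_one mdiff_mzero e3 ..
    ultimately have "mdiff ?C (mscale 1 (mone (n+n))) = mmult (n+n) (madj ?W) ?W" by simp
    moreover have "supp (n+n) ?W" using Y(1) Z(1) by (intro mat_in_blk supp_intros) auto
    ultimately have 6: "mle (n+n) (mscale 1 (mone (n+n))) ?C" unfolding mle_def mpos_def by blast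
    have "mabs_ge (n+n) ?X 1" unfolding mabs_ge_def using 3 4 5 6 by blast
    then have "hform_gap E (n+n) ?X 1" unfolding hform_gap_def using 1 2 by simp
    then show ?thesis by blast
  qed
qed



definition Rt :: "nat \<Rightarrow> real \<Rightarrow> 'a::real_normed_algebra_1 mat" where
  "Rt n t = rot n (cos (pi/2 * t)) (sin (pi/2 * t))"

definition Wp :: "nat \<Rightarrow> 'a::cstar_algebra mat \<Rightarrow> real \<Rightarrow> 'a mat" where
  "Wp n u t = mmult (n+n) (mmult (n+n) (Rt n t) (blk n u mzero mzero (mone n))) (madj (Rt n t))"

definition pp :: "nat \<Rightarrow> 'a::cstar_algebra mat \<Rightarrow> 'a mat \<Rightarrow> real \<Rightarrow> 'a mat" where
  "pp n u x t = mmult (n+n) (mmult (n+n) (Wp n u t) (blk n x mzero mzero (mone n))) (madj (Wp n u t))"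

lemma uni_Wp: "munitary n S u \<Longrightarrow> uni (n+n) (Wp n u t)"
  unfolding Wp_def Rt_def
  by (intro uni_mult uni_madj uni_rot uni_U) (auto simp: sin_cos_squared_add3)

lemma matL_Wp: "opsys E \<Longrightarrow> munitary n (L E) u \<Longrightarrow> mat_in (n+n) (L E) (Wp n u t)"
  unfolding Wp_def Rt_def madj_rot unfolding rot_def
  by (intro matL_mmult mat_in_blk matL_msc matL_mzero matL_mone zero_mem_mul)
     (auto simp: munitary_def)

lemma munitary_Wp: "opsys E \<Longrightarrow> munitary n (L E) u \<Longrightarrow> munitary (n+n) (L E) (Wp n u t)"
  using uni_Wp[of n "L E" u t] matL_Wp[of E n u t] unfolding uni_def munitary_def by auto

lemma pp_H: "opsys E \<Longrightarrow> munitary n (L E) u \<Longrightarrow> hform_gap E n x g \<Longrightarrow> pp n u x t \<in> H E (n+n)"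
proof -
  assume o: "opsys E" and u: "munitary n (L E) u" and h: "hform_gap E n x g"
  obtain g' where "hform_gap E (n+n) (blk n x mzero mzero (mone n)) g'" using x2_gap[OF o h] by blast
  then have "hform_gap E (n+n) (pp n u x t) g'"
    unfolding pp_def by (rule conj_gap[OF o munitary_Wp[OF o u]])
  then show ?thesis unfolding H_def by blast
qed

lemma pp_0: "munitary n S u \<Longrightarrow> supp n x \<Longrightarrow> pp n u x 0 = blk n (mmult n (mmult n u x) (madj u)) mzero mzero (mone n)"
proof -
  assume u: "munitary n S u" and sx: "supp n x"
  have su: "supp n u" using u unfolding munitary_def by (auto dest: mat_in_supp)
  have R0: "Rt n 0 = (mone (n+n) :: 'a mat)" unfolding Rt_def rot_def mone_blk by simp
  have sU: "supp (n+n) (blk n u mzero mzero (mone n))" using su by (intro mat_in_blk supp_intros) auto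
  have W0: "Wp n u 0 = blk n u mzero mzero (mone n)"
    unfolding Wp_def R0 madj_mone using sU by (simp add: mmult_mone_left mmult_mone_right)
  show ?thesis unfolding pp_def W0 madj_blk blk_mult using su sx
    by (simp add: mmult_mone_left mmult_mone_right supp_intros)
qed

lemma pp_1: "munitary n S u \<Longrightarrow> supp n x \<Longrightarrow> pp n u x 1 = blk n x mzero mzero (mone n)"
proof -
  assume u: "munitary n S u" and sx: "supp n x"
  have su: "supp n u" and uu: "mmult n u (madj u) = mone n" using u unfolding munitary_def by (auto dest: mat_in_supp)
  have R1: "Rt n 1 = (rot n 0 1 :: 'a mat)" unfolding Rt_def by simp
  have W1: "Wp n u 1 = blk n (mone n) mzero mzero u"
    unfolding Wp_def R1 madj_rot unfolding rot_def blk_mult using su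
    by (simp add: mmult_msc_left mmult_msc_right mmult_mone_left mmult_mone_right supp_intros)
  show ?thesis unfolding pp_def W1 madj_blk blk_mult using su sx uu
    by (simp add: mmult_mone_left mmult_mone_right supp_intros)
qed



lemma enorm_madd: "enorm m (madd X Y) \<le> enorm m X + enorm m Y"
  unfolding enorm_def madd_def sum.distrib[symmetric]
  by (intro sum_mono norm_triangle_ineq)

primrec Yseq :: "nat \<Rightarrow> 'a::cstar_algebra mat \<Rightarrow> nat \<Rightarrow> 'a mat" where
  "Yseq m Z 0 = mzero"
| "Yseq m Z (Suc k) = mscale (1/2) (madd Z (mmult m (Yseq m Z k) (Yseq m Z k)))"

lemma madd_mdiff_tele: "madd (mdiff A B) (mdiff B C) = mdiff A (C::'a::ab_group_add mat)"
  unfolding madd_def mdiff_def by (auto intro!: ext)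
lemma mdiff_half: "mdiff (mscale h (madd Z A)) (mscale h (madd Z B)) = mscale h (mdiff A (B::'a::real_vector mat))"
  unfolding madd_def mdiff_def mscale_def by (auto intro!: ext simp: scaleR_add_right scaleR_diff_right)

lemma sqrt_pos:
  fixes Z :: "'a::cstar_algebra mat"
  assumes sZ: "supp m Z" and aZ: "madj Z = Z" and nZ: "enorm m Z \<le> 1/4"
  shows "mpos m (mdiff (mone m) Z)"
proof -
  define Y where "Y = Yseq m Z"
  have Y0: "Y 0 = mzero" and YS: "\<And>k. Y (Suc k) = mscale (1/2) (madd Z (mmult m (Y k) (Y k)))"
    unfolding Y_def by simp_all
  have sY: "supp m (Y k)" for k
    by (induction k) (use sZ in \<open>simp_all add: Y0 YS supp_intros\<close>)
  have aY: "madj (Y k) = Y k" for k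
    by (induction k) (simp_all add: Y0 YS madj_mscale madj_madd aZ madj_mmult)
  have nY: "enorm m (Y k) \<le> 1/4" for k
  proof (induction k)
    case 0 then show ?case by (simp add: Y0 enorm_def mzero_def)
  next
    case (Suc k)
    have "enorm m (mmult m (Y k) (Y k)) \<le> enorm m (Y k) * enorm m (Y k)" by (rule enorm_mmult)
    also have "\<dots> \<le> (1/4) * (1/4)" using Suc enorm_nonneg[of m "Y k"] by (intro mult_mono) auto
    finally have a: "enorm m (mmult m (Y k) (Y k)) \<le> 1/16" by simp
    have "enorm m (Y (Suc k)) = 1/2 * enorm m (madd Z (mmult m (Y k) (Y k)))"
      unfolding YS enorm_mscale by simp
    also have "\<dots> \<le> 1/2 * (enorm m Z + enorm m (mmult m (Y k) (Y k)))"
      by (intro mult_left_mono enorm_madd) auto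
    also have "\<dots> \<le> 1/4" using a nZ by simp
    finally show ?case .
  qed
  define d where "d k = mdiff (Y (Suc k)) (Y k)" for k
  have sd: "supp m (d k)" for k unfolding d_def by (intro supp_intros sY)
  have dS: "d (Suc k) = mscale (1/2) (madd (mmult m (Y (Suc k)) (d k)) (mmult m (d k) (Y k)))" for k
  proof -
    have "d (Suc k) = mscale (1/2) (mdiff (mmult m (Y (Suc k)) (Y (Suc k))) (mmult m (Y k) (Y k)))"
      unfolding d_def by (subst (1 2) YS) (rule mdiff_half)
    also have "mdiff (mmult m (Y (Suc k)) (Y (Suc k))) (mmult m (Y k) (Y k)) = madd (mmult m (Y (Suc k)) (d k)) (mmult m (d k) (Y k))"
      unfolding d_def mmult_mdiff_left mmult_mdiff_right madd_mdiff_tele ..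
    finally show ?thesis .
  qed
  have nd: "enorm m (d (Suc k)) \<le> 1/4 * enorm m (d k)" for k
  proof -
    have "enorm m (d (Suc k)) \<le> 1/2 * (enorm m (mmult m (Y (Suc k)) (d k)) + enorm m (mmult m (d k) (Y k)))"
      unfolding dS enorm_mscale by (simp add: enorm_madd)
    also have "\<dots> \<le> 1/2 * (enorm m (Y (Suc k)) * enorm m (d k) + enorm m (d k) * enorm m (Y k))"
      by (intro mult_left_mono add_mono enorm_mmult) auto
    also have "\<dots> \<le> 1/2 * (1/4 * enorm m (d k) + enorm m (d k) * (1/4))"
      using nY enorm_nonneg[of m "d k"]
      by (intro mult_left_mono add_mono mult_right_mono mult_left_mono) auto
    finally show ?thesis by simp
  qed
  define c where "c = enorm m (d 0)"
  have ndk: "enorm m (d k) \<le> c * (1/4)^k" for k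
  proof (induction k)
    case 0 then show ?case by (simp add: c_def)
  next
    case (Suc k)
    have "enorm m (d (Suc k)) \<le> 1/4 * enorm m (d k)" by (rule nd)
    also have "\<dots> \<le> 1/4 * (c * (1/4)^k)" using Suc by simp
    finally show ?case by (simp add: algebra_simps)
  qed
  have c0: "0 \<le> c" unfolding c_def by (rule enorm_nonneg)
  have entry: "norm (d k i j) \<le> c * (1/4)^k" for k i j
  proof (cases "i < m \<and> j < m")
    case True
    then have "norm (d k i j) \<le> enorm m (d k)" by (intro entry_le_enorm) auto
    then show ?thesis using ndk[of k] by simp
  next
    case False
    then have "d k i j = 0" using sd[of k] unfolding supp_iff by auto
    then show ?thesis using c0 by simp
  qed
  have summ: "summable (\<lambda>k. d k i j)" for i j
  proof (rule summable_comparison_test)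
    show "\<exists>N. \<forall>k\<ge>N. norm (d k i j) \<le> c * (1/4)^k" using entry by blast
    show "summable (\<lambda>k. c * (1/4::real)^k)" by (intro summable_mult summable_geometric) simp
  qed
  have Ysum: "Y k i j = (\<Sum>l<k. d l i j)" for k i j
    by (induction k) (simp_all add: Y0 mzero_def d_def mdiff_def)
  define Yl where "Yl i j = (\<Sum>l. d l i j)" for i j
  have lim: "(\<lambda>k. Y k i j) \<longlonglongrightarrow> Yl i j" for i j
    unfolding Ysum Yl_def by (rule summable_LIMSEQ[OF summ])
  have fixp: "Yl = mscale (1/2) (madd Z (mmult m Yl Yl))"
  proof (intro ext)
    fix i j
    have "(\<lambda>k. Y (Suc k) i j) \<longlonglongrightarrow> Yl i j" using lim by (rule LIMSEQ_Suc)
    moreover have "(\<lambda>k. Y (Suc k) i j) \<longlonglongrightarrow> mscale (1/2) (madd Z (mmult m Yl Yl)) i j"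
      unfolding YS mscale_def madd_def mmult_def
      by (intro tendsto_intros lim)
    ultimately show "Yl i j = mscale (1/2) (madd Z (mmult m Yl Yl)) i j" by (rule LIMSEQ_unique)
  qed
  have sYl: "supp m Yl"
    unfolding supp_iff
  proof (intro allI impI)
    fix i j assume "m \<le> i \<or> m \<le> j"
    then have "\<And>k. Y k i j = 0" using sY unfolding supp_iff by auto
    then have "(\<lambda>k. Y k i j) \<longlonglongrightarrow> 0" by simp
    then show "Yl i j = 0" using lim by (rule LIMSEQ_unique[rotated])
  qed
  have aYl: "madj Yl = Yl"
  proof (intro ext)
    fix i j
    have "(\<lambda>k. adj (Y k j i)) \<longlonglongrightarrow> adj (Yl j i)" by (intro tendsto_intros lim)
    moreover have "\<And>k. adj (Y k j i) = Y k i j" using aY unfolding madj_def by metis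
    ultimately have "(\<lambda>k. Y k i j) \<longlonglongrightarrow> adj (Yl j i)" by simp
    then show "madj Yl i j = Yl i j" unfolding madj_def using lim by (rule LIMSEQ_unique)
  qed
  define W where "W = mdiff (mone m) Yl"
  have sW: "supp m W" unfolding W_def by (intro supp_intros sYl)
  have aW: "madj W = W" unfolding W_def madj_mdiff aYl madj_mone ..
  have "mmult m W W = mdiff (mdiff (mone m) Yl) (mdiff Yl (mmult m Yl Yl))"
    unfolding W_def mmult_mdiff_left mmult_mdiff_right using sYl
    by (simp add: mmult_mone_left mmult_mone_right supp_intros)
  also have "\<dots> = mdiff (mone m) Z"
  proof (intro ext)
    fix i j
    have fp: "Yl i j = (1/2) *\<^sub>R (Z i j + mmult m Yl Yl i j)"
      using fun_cong[OF fun_cong[OF fixp, of i], of j] unfolding mscale_def madd_def .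
    have "Yl i j + Yl i j = Z i j + mmult m Yl Yl i j"
      unfolding fp by (simp add: scaleR_add_left[symmetric])
    then show "mdiff (mdiff (mone m) Yl) (mdiff Yl (mmult m Yl Yl)) i j = mdiff (mone m) Z i j"
      unfolding mdiff_def by (simp add: algebra_simps)
  qed
  finally have "mdiff (mone m) Z = mmult m (madj W) W" unfolding aW by simp
  then show ?thesis unfolding mpos_def using sW by blast
qed



lemma mscale_inv_diff: "a \<noteq> 0 \<Longrightarrow> mscale a (mdiff A (mscale (1/a) B)) = mdiff (mscale a A) (B::'a::real_vector mat)"
  unfolding mscale_def mdiff_def by (auto intro!: ext simp: scaleR_diff_right)

lemma mnorm_mem:
  fixes D :: "'a::cstar_algebra mat"
  assumes sD: "supp m D" and tp: "0 < t" and le: "2 * enorm m D \<le> t"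
  shows "t \<in> {t. 0 \<le> t \<and> mle m (mmult m (madj D) D) (mscale (t\<^sup>2) (mone m))}"
proof -
  let ?Z = "mscale (1/t\<^sup>2) (mmult m (madj D) D)"
  have sZ: "supp m ?Z" using sD by (intro supp_intros)
  have aZ: "madj ?Z = ?Z" unfolding madj_mscale madj_mmult madj_madj ..
  have e0: "0 \<le> enorm m D" by (rule enorm_nonneg)
  have "enorm m ?Z = 1/t\<^sup>2 * enorm m (mmult m (madj D) D)" unfolding enorm_mscale by simp
  also have "\<dots> \<le> 1/t\<^sup>2 * (enorm m D * enorm m D)"
    using enorm_mmult[of m "madj D" D] unfolding enorm_madj by (intro mult_left_mono) auto
  also have "\<dots> \<le> 1/4"
  proof -
    have "enorm m D * enorm m D \<le> (t/2) * (t/2)" using le e0 by (intro mult_mono) auto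
    then have "enorm m D * enorm m D \<le> t\<^sup>2 / 4" by (simp add: power2_eq_square)
    then show ?thesis using tp by (simp add: field_simps)
  qed
  finally have nZ: "enorm m ?Z \<le> 1/4" .
  obtain W where W: "supp m W" "mdiff (mone m) ?Z = mmult m (madj W) W"
    using sqrt_pos[OF sZ aZ nZ] unfolding mpos_def by blast
  have "mdiff (mscale (t\<^sup>2) (mone m)) (mmult m (madj D) D) = mscale (t\<^sup>2) (mdiff (mone m) ?Z)"
    using tp by (intro mscale_inv_diff[symmetric]) simp
  also have "\<dots> = mmult m (madj (mscale t W)) (mscale t W)"
    unfolding W(2) by (simp only: madj_mscale mmult_mscale_left mmult_mscale_right mscale_mscale power2_eq_square)
  finally have "mpos m (mdiff (mscale (t\<^sup>2) (mone m)) (mmult m (madj D) D))"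
    unfolding mpos_def using W(1) by (blast intro: supp_intros)
  then show ?thesis unfolding mle_def using tp by simp
qed

lemma mnorm_bounds:
  fixes D :: "'a::cstar_algebra mat"
  assumes sD: "supp m D"
  shows "0 \<le> mnorm m D" "mnorm m D \<le> 2 * enorm m D"
proof -
  define S where "S = {t. 0 \<le> t \<and> mle m (mmult m (madj D) D) (mscale (t\<^sup>2) (mone m))}"
  have mem: "t \<in> S" if "0 < t" "2 * enorm m D \<le> t" for t
    unfolding S_def using mnorm_mem[OF sD that] .
  have ne: "S \<noteq> {}" using mem[of "2 * enorm m D + 1"] enorm_nonneg[of m D] by auto
  have bdd: "bdd_below S" unfolding S_def bdd_below_def by auto
  have "mnorm m D = Inf S" unfolding mnorm_def S_def ..
  moreover have "0 \<le> Inf S" using ne by (rule cInf_greatest) (auto simp: S_def)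
  moreover have "Inf S \<le> 2 * enorm m D"
  proof (rule field_le_epsilon)
    fix e :: real assume "0 < e"
    then have "2 * enorm m D + e \<in> S" using enorm_nonneg[of m D] by (intro mem) auto
    then show "Inf S \<le> 2 * enorm m D + e" using bdd by (rule cInf_lower)
  qed
  ultimately show "0 \<le> mnorm m D" "mnorm m D \<le> 2 * enorm m D" by simp_all
qed

definition mlim :: "'b filter \<Rightarrow> ('b \<Rightarrow> 'a::topological_space mat) \<Rightarrow> 'a mat \<Rightarrow> bool" where
  "mlim F P A \<longleftrightarrow> (\<forall>i j. ((\<lambda>s. P s i j) \<longlongrightarrow> A i j) F)"

lemma mlim_const: "mlim F (\<lambda>s. A) A"
  unfolding mlim_def by simp
lemma mlim_mmult: "mlim F P A \<Longrightarrow> mlim F Q B \<Longrightarrow> mlim F (\<lambda>s. mmult m (P s) (Q s)) (mmult m A (B::'a::real_normed_algebra mat))"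
  unfolding mlim_def mmult_def by (auto intro!: tendsto_intros)
lemma mlim_madj: "mlim F P A \<Longrightarrow> mlim F (\<lambda>s. madj (P s)) (madj (A::'a::cstar_algebra mat))"
  unfolding mlim_def madj_def by (auto intro!: tendsto_intros)
lemma mlim_msc: "(f \<longlongrightarrow> a) F \<Longrightarrow> mlim F (\<lambda>s. msc n (f s)) (msc n a::'a::real_normed_algebra_1 mat)"
  unfolding mlim_def msc_def mscale_def by (auto intro!: tendsto_intros)
lemma mlim_blk: "mlim F PA A \<Longrightarrow> mlim F PB B \<Longrightarrow> mlim F PC C \<Longrightarrow> mlim F PD D \<Longrightarrow>
  mlim F (\<lambda>s. blk n (PA s) (PB s) (PC s) (PD s)) (blk n A B C (D::'a::{zero,topological_space} mat))"
  unfolding mlim_def blk_def by auto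

lemma mlim_pp: "mlim (at t within S) (\<lambda>s. pp n u x s) (pp n u x t)"
proof -
  define F where "F = at t within S"
  have c: "((\<lambda>s. cos (pi/2 * s)) \<longlongrightarrow> cos (pi/2 * t)) F" "((\<lambda>s. sin (pi/2 * s)) \<longlongrightarrow> sin (pi/2 * t)) F"
    "((\<lambda>s. - sin (pi/2 * s)) \<longlongrightarrow> - sin (pi/2 * t)) F"
    unfolding F_def by (intro tendsto_intros)+
  have R: "mlim F (\<lambda>s. Rt n s) (Rt n t :: 'a mat)"
    unfolding Rt_def rot_def by (intro mlim_blk mlim_msc c)
  show ?thesis unfolding pp_def Wp_def
    unfolding F_def[symmetric] by (intro mlim_mmult mlim_madj mlim_const R)
qed

lemma enorm_tendsto: fixes P :: "'b \<Rightarrow> 'a::real_normed_vector mat" shows "mlim F P A \<Longrightarrow> ((\<lambda>s. enorm m (mdiff (P s) A)) \<longlongrightarrow> 0) F"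
proof -
  assume h: "mlim F P A"
  have "((\<lambda>s. \<Sum>i<m. \<Sum>j<m. norm (P s i j - A i j)) \<longlongrightarrow> (\<Sum>i<m. \<Sum>j<m. norm (0::'a)) ) F"
    using h unfolding mlim_def by (intro tendsto_sum tendsto_norm LIM_zero) auto
  then show ?thesis unfolding enorm_def mdiff_def by simp
qed



lemma supp_pp: "opsys E \<Longrightarrow> munitary n (L E) u \<Longrightarrow> hform_gap E n x g \<Longrightarrow> supp (n+n) (pp n u x t)"
  using pp_H[of E n u x g t] unfolding H_def hform_gap_def by (auto dest: mat_in_supp)

theorem lemma3p11:
  fixes E :: "'a::cstar_algebra set" and n :: nat and u x :: "'a mat" and g :: real
  assumes "is_cstar_envelope E"
    and "munitary n (multipliers E) u"
    and "hform_gap E n x g"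
  shows "hform_gap E n (mmult n (mmult n u x) (madj u)) g
       \<and> hequiv E (2 * n) (dsum n n (mmult n (mmult n u x) (madj u)) (mone n)) (dsum n n x (mone n))"
proof
  have o: "opsys E" using assms(1) unfolding is_cstar_envelope_def by simp
  have sx: "supp n x" using assms(3) unfolding hform_gap_def by (auto dest: mat_in_supp)
  show "hform_gap E n (mmult n (mmult n u x) (madj u)) g"
    by (rule conj_gap[OF o assms(2) assms(3)])
  have cont: "((\<lambda>s. mnorm (n+n) (mdiff (pp n u x s) (pp n u x t))) \<longlongrightarrow> 0) (at t within {0..1})" for t
  proof (rule tendsto_sandwich)
    have sD: "supp (n+n) (mdiff (pp n u x s) (pp n u x t))" for s
      using supp_pp[OF o assms(2) assms(3)] by (intro supp_intros)
    show "\<forall>\<^sub>F s in at t within {0..1}. (\<lambda>s. 0) s \<le> mnorm (n+n) (mdiff (pp n u x s) (pp n u x t))"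
      using mnorm_bounds(1)[OF sD] by simp
    show "\<forall>\<^sub>F s in at t within {0..1}. mnorm (n+n) (mdiff (pp n u x s) (pp n u x t)) \<le> 2 * enorm (n+n) (mdiff (pp n u x s) (pp n u x t))"
      using mnorm_bounds(2)[OF sD] by simp
    show "((\<lambda>s. 0::real) \<longlongrightarrow> 0) (at t within {0..1})" by simp
    have "((\<lambda>s. enorm (n+n) (mdiff (pp n u x s) (pp n u x t))) \<longlongrightarrow> 0) (at t within {0..1})"
      by (rule enorm_tendsto[OF mlim_pp])
    then show "((\<lambda>s. 2 * enorm (n+n) (mdiff (pp n u x s) (pp n u x t))) \<longlongrightarrow> 0) (at t within {0..1})"
      using tendsto_mult_left[of "\<lambda>s. enorm (n+n) (mdiff (pp n u x s) (pp n u x t))" 0 "at t within {0..1}" 2] by simp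
  qed
  have "hequiv E (n+n) (dsum n n (mmult n (mmult n u x) (madj u)) (mone n)) (dsum n n x (mone n))"
    unfolding hequiv_def
  proof (intro exI[of _ "pp n u x"] conjI ballI)
    show "pp n u x 0 = dsum n n (mmult n (mmult n u x) (madj u)) (mone n)"
      unfolding dsum_blk by (rule pp_0[OF assms(2) sx])
    show "pp n u x 1 = dsum n n x (mone n)"
      unfolding dsum_blk by (rule pp_1[OF assms(2) sx])
    fix t :: real
    show "pp n u x t \<in> H E (n+n)" by (rule pp_H[OF o assms(2) assms(3)])
    show "((\<lambda>s. mnorm (n+n) (mdiff (pp n u x s) (pp n u x t))) \<longlongrightarrow> 0) (at t within {0..1})"
      by (rule cont)
  qed
  then show "hequiv E (2 * n) (dsum n n (mmult n (mmult n u x) (madj u)) (mone n)) (dsum n n x (mone n))"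
    by (simp add: mult_2)
qed


end
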